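(* Let $p\ge3$ and let $n_1\ge n_2\ge\dots\ge n_p\ge1$ be positive integers such that $n_1+\sum_{i=2}^p\sigma_in_i=0$ for some $\sigma_2,\dots,\sigma_p\in\{-1,0,1\}$. Then for every $0<\alpha<1$, $$\sum_{i=2}^pn_i^\alpha-n_1^\alpha\ge(2-2^\alpha)\sum_{i=3}^pn_i^\alpha.$$ *)

theory Defs
  imports Complex_Main
begin

end

theory Submission
  imports Defs
begin

lemma stepA:
  fixes t m a :: real
  assumes "0 < m" "m \<le> t" "0 < a" "a < 1"
  shows "(t + m) powr a \<le> t powr a + (2 powr a - 1) * m powr a"
proof -
  let ?h = "\<lambda>x. (x + m) powr a - x powr a"
  have "?h m \<ge> ?h t"
  proof (rule DERIV_nonpos_imp_nonincreasing[OF assms(2)])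
    fix x assume x: "m \<le> x" "x \<le> t"
    hence xp: "x > 0" using assms by simp
    have d1: "((\<lambda>x. (x + m) powr a) has_real_derivative a * (x + m) powr (a - 1)) (at x)"
      using has_real_derivative_powr[of "x+m" a] DERIV_chain2[where g="\<lambda>x. x + m"] xp assms
      by (auto intro!: derivative_eq_intros simp: field_simps)
    have d2: "((\<lambda>x. x powr a) has_real_derivative a * x powr (a - 1)) (at x)"
      using has_real_derivative_powr[OF xp] .
    have "(x + m) powr (a - 1) \<le> x powr (a - 1)"
      using powr_mono2'[of "a-1" x "x+m"] xp assms by simp
    hence "a * (x + m) powr (a - 1) - a * x powr (a - 1) \<le> 0"
      using assms by (simp add: mult_left_mono)
    thus "\<exists>y. DERIV ?h x :> y \<and> y \<le> 0"
      using DERIV_diff[OF d1 d2] by blast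
  qed
  moreover have "(m + m) powr a = 2 powr a * m powr a"
    using assms by (simp add: powr_mult[symmetric])
  ultimately show ?thesis by (simp add: algebra_simps)
qed

theorem lemmaC1:
  fixes p :: nat and n :: "nat \<Rightarrow> nat" and \<sigma> :: "nat \<Rightarrow> int" and \<alpha> :: real
  assumes "p \<ge> 3"
    and "\<And>i j. 1 \<le> i \<Longrightarrow> i \<le> j \<Longrightarrow> j \<le> p \<Longrightarrow> n j \<le> n i"
    and "\<And>i. 1 \<le> i \<Longrightarrow> i \<le> p \<Longrightarrow> n i \<ge> 1"
    and "\<And>i. 2 \<le> i \<Longrightarrow> i \<le> p \<Longrightarrow> \<sigma> i \<in> {-1, 0, 1}"
    and "int (n 1) + (\<Sum>i=2..p. \<sigma> i * int (n i)) = 0"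
    and "0 < \<alpha>" and "\<alpha> < 1"
  shows "(\<Sum>i=2..p. real (n i) powr \<alpha>) - real (n 1) powr \<alpha>
           \<ge> (2 - 2 powr \<alpha>) * (\<Sum>i=3..p. real (n i) powr \<alpha>)"
proof -
  have B: "k \<le> p \<Longrightarrow> (\<Sum>i=2..k. real (n i)) powr \<alpha>
      \<le> real (n 2) powr \<alpha> + (2 powr \<alpha> - 1) * (\<Sum>i=3..k. real (n i) powr \<alpha>)" if "2 \<le> k" for k
    using that
  proof (induction k rule: dec_induct)
    case base
    then show ?case by simp
  next
    case (step k)
    have pos: "0 < real (n (Suc k))" using assms(3)[of "Suc k"] step by simp
    have le2: "real (n (Suc k)) \<le> real (n 2)" using assms(2)[of 2 "Suc k"] step by simp
    have "real (n 2) \<le> (\<Sum>i=2..k. real (n i))"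
      by (rule member_le_sum) (use step.hyps in auto)
    with le2 have le: "real (n (Suc k)) \<le> (\<Sum>i=2..k. real (n i))" by linarith
    have "(\<Sum>i=2..Suc k. real (n i)) = (\<Sum>i=2..k. real (n i)) + real (n (Suc k))"
      using step by simp
    hence "(\<Sum>i=2..Suc k. real (n i)) powr \<alpha>
       \<le> (\<Sum>i=2..k. real (n i)) powr \<alpha> + (2 powr \<alpha> - 1) * real (n (Suc k)) powr \<alpha>"
      using stepA[OF pos le assms(6,7)] by simp
    also have "\<dots> \<le> real (n 2) powr \<alpha> + (2 powr \<alpha> - 1) * (\<Sum>i=3..k. real (n i) powr \<alpha>)
         + (2 powr \<alpha> - 1) * real (n (Suc k)) powr \<alpha>"
      using step by simp
    also have "\<dots> = real (n 2) powr \<alpha> + (2 powr \<alpha> - 1) * (\<Sum>i=3..Suc k. real (n i) powr \<alpha>)"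
      using step by (simp add: algebra_simps)
    finally show ?case .
  qed
  have "int (n 1) = (\<Sum>i=2..p. - \<sigma> i * int (n i))"
    using assms(5) by (simp add: sum_negf)
  also have "\<dots> \<le> (\<Sum>i=2..p. int (n i))"
  proof (rule sum_mono)
    fix i assume "i \<in> {2..p}"
    thus "- \<sigma> i * int (n i) \<le> int (n i)" using assms(4)[of i] by auto
  qed
  finally have "real_of_int (int (n 1)) \<le> real_of_int (\<Sum>i=2..p. int (n i))"
    by (simp only: of_int_le_iff)
  hence "real (n 1) \<le> (\<Sum>i=2..p. real (n i))"
    by (simp only: of_int_sum of_int_of_nat_eq)
  hence "real (n 1) powr \<alpha> \<le> (\<Sum>i=2..p. real (n i)) powr \<alpha>"
    using assms(6) by (simp add: powr_mono2)
  also have "\<dots> \<le> real (n 2) powr \<alpha> + (2 powr \<alpha> - 1) * (\<Sum>i=3..p. real (n i) powr \<alpha>)"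
    using B[of p] assms(1) by linarith
  finally have *: "real (n 1) powr \<alpha> \<le> real (n 2) powr \<alpha> + (2 powr \<alpha> - 1) * (\<Sum>i=3..p. real (n i) powr \<alpha>)" .
  have "(\<Sum>i=2..p. real (n i) powr \<alpha>) = real (n 2) powr \<alpha> + (\<Sum>i=3..p. real (n i) powr \<alpha>)"
  proof -
    have "(\<Sum>i=2..p. real (n i) powr \<alpha>) = real (n 2) powr \<alpha> + (\<Sum>i=Suc 2..p. real (n i) powr \<alpha>)"
      using assms(1) by (intro sum.atLeast_Suc_atMost) simp
    thus ?thesis by (simp add: numeral_3_eq_3)
  qed
  with * show ?thesis by (simp add: algebra_simps)
qed

end
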